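(* For all $n\ge1$, the number of $2$-element faces of the broken circuit complex of $\mathcal{A}_n$ (with respect to the binary order) is \[ f_1(BC(\mathcal{A}_n))=2S(n+1,3)+3S(n+1,4). \]
   Context: For $n\ge1$, $\mathcal{A}_n$ is the resonance arrangement in $\mathbb{R}^n$ of hyperplanes $H_I=\{x:\sum_{i\in I}x_i=0\}$, $\emptyset\ne I\subseteq[n]$. Binary order: $H_I$ is encoded by $\sum_{j\in I}2^j$ and hyperplanes are linearly ordered by this number. A circuit is a minimally linearly dependent set of hyperplanes (of normal vectors $\chi_I$); a broken circuit is $C\setminus\{H\}$ with $C$ a circuit and $H$ its largest element. The broken circuit complex $BC(\mathcal{A})$ is the simplicial complex of subsets of $\mathcal{A}$ containing no broken circuit, and $f_1$ counts its faces with $2$ elements. $S(n,k)$ denotes the Stirling number of the second kind. *)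

theory Defs
  imports Complex_Main "HOL-Combinatorics.Stirling"
begin

text \<open>The resonance arrangement A_n: one hyperplane H_I for each nonempty I \<subseteq> [n] = {1..n};
  we identify H_I with its index set I.\<close>
definition res_hyps :: "nat \<Rightarrow> nat set set" where
  "res_hyps n = {I. I \<subseteq> {1..n} \<and> I \<noteq> {}}"

text \<open>Normal vector chi_I (a vector in R^n, coordinates indexed by 1..n, zero elsewhere).\<close>
definition chi :: "nat set \<Rightarrow> nat \<Rightarrow> real" where
  "chi I j = (if j \<in> I then 1 else 0)"

definition lin_dep :: "nat set set \<Rightarrow> bool" where
  "lin_dep S \<longleftrightarrow> (\<exists>c :: nat set \<Rightarrow> real. (\<exists>I\<in>S. c I \<noteq> 0) \<and>
                     (\<forall>j. (\<Sum>I\<in>S. c I * chi I j) = 0))"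

text \<open>Binary order: H_I is encoded by sum of 2^j over j in I.\<close>
definition bin_code :: "nat set \<Rightarrow> nat" where
  "bin_code I = (\<Sum>j\<in>I. 2 ^ j)"

definition circuit :: "nat \<Rightarrow> nat set set \<Rightarrow> bool" where
  "circuit n C \<longleftrightarrow> C \<subseteq> res_hyps n \<and> lin_dep C \<and> (\<forall>D. D \<subset> C \<longrightarrow> \<not> lin_dep D)"

definition broken_circuit :: "nat \<Rightarrow> nat set set \<Rightarrow> bool" where
  "broken_circuit n B \<longleftrightarrow> (\<exists>C H. circuit n C \<and> H \<in> C \<and>
      (\<forall>H'\<in>C. bin_code H' \<le> bin_code H) \<and> B = C - {H})"

definition bc_faces :: "nat \<Rightarrow> nat set set set" where
  "bc_faces n = {F. F \<subseteq> res_hyps n \<and> \<not> (\<exists>B. broken_circuit n B \<and> B \<subseteq> F)}"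

definition f1_BC :: "nat \<Rightarrow> nat" where
  "f1_BC n = card {F \<in> bc_faces n. card F = 2}"

end

theory Submission
  imports Defs "HOL-Library.FuncSet"
begin


lemma stir3: "2 * int (Stirling (Suc n) 3) = 3^n - 2^(n+1) + 1"
proof (induction n)
  case 0 then show ?case by (simp add: numeral_3_eq_3)
next
  case (Suc n)
  have "Stirling (Suc (Suc n)) 3 = 3 * Stirling (Suc n) 3 + Stirling (Suc n) 2"
    by (simp add: numeral_3_eq_3 numeral_2_eq_2)
  moreover have "int (Stirling (Suc n) 2) = 2^n - 1"
    using Stirling_2[of n] by (simp add: numeral_2_eq_2 of_nat_diff)
  ultimately show ?case using Suc by (simp add: algebra_simps)
qed

lemma stir4: "6 * int (Stirling (Suc n) 4) = 4^n - 3^(n+1) + 3 * 2^n - 1"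
proof (induction n)
  case 0 then show ?case by (simp add: numeral_eq_Suc)
next
  case (Suc n)
  have "Stirling (Suc (Suc n)) 4 = 4 * Stirling (Suc n) 4 + Stirling (Suc n) 3"
    by (simp add: numeral_eq_Suc)
  then show ?case using Suc stir3[of n] by (simp add: algebra_simps)
qed

lemma card_disj:
  assumes "finite S"
  shows "card {(A,B). A \<subseteq> S \<and> B \<subseteq> S \<and> A \<inter> B = {}} = 3 ^ card S"
proof -
  define g where "g = (\<lambda>f::'a\<Rightarrow>nat. ({x\<in>S. f x = 1}, {x\<in>S. f x = 2}))"
  define h where "h = (\<lambda>(A,B). (\<lambda>x. if x \<in> S then (if x\<in>A then 1 else if x\<in>B then 2 else 0) else undefined)::'a\<Rightarrow>nat)"
  have "bij_betw g (PiE S (\<lambda>_. {0,1,2})) {(A,B). A \<subseteq> S \<and> B \<subseteq> S \<and> A \<inter> B = {}}"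
  proof (rule bij_betw_byWitness[where f'=h])
    show "\<forall>a\<in>PiE S (\<lambda>_. {0,1,2}). h (g a) = a"
    proof
      fix f assume f: "f \<in> PiE S (\<lambda>_. {0::nat,1,2})"
      show "h (g f) = f"
      proof
        fix x show "h (g f) x = f x"
          using f by (cases "x \<in> S") (auto simp: g_def h_def PiE_def extensional_def)
      qed
    qed
    show "\<forall>a'\<in>{(A,B). A \<subseteq> S \<and> B \<subseteq> S \<and> A \<inter> B = {}}. g (h a') = a'"
      by (auto simp: g_def h_def)
    show "g ` PiE S (\<lambda>_. {0,1,2}) \<subseteq> {(A,B). A \<subseteq> S \<and> B \<subseteq> S \<and> A \<inter> B = {}}"
      by (auto simp: g_def)
    show "h ` {(A,B). A \<subseteq> S \<and> B \<subseteq> S \<and> A \<inter> B = {}} \<subseteq> PiE S (\<lambda>_. {0,1,2})"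
      by (auto simp: h_def split: if_splits)
  qed
  then have "card {(A,B). A \<subseteq> S \<and> B \<subseteq> S \<and> A \<inter> B = {}} = card (PiE S (\<lambda>_. {0::nat,1,2}))"
    by (simp add: bij_betw_same_card)
  also have "\<dots> = 3 ^ card S" using assms by (simp add: card_PiE numeral_3_eq_3)
  finally show ?thesis .
qed

lemma card_U:
  assumes fin: "finite S"
  shows "2 * card {F. \<exists>A B. F = {A,B} \<and> A \<subseteq> S \<and> B \<subseteq> S \<and> A \<noteq> B \<and> A \<inter> B \<noteq> {}} + 3 ^ card S + 2 ^ card S
         = 4 ^ card S + 1"
proof -
  define U where "U = {F. \<exists>A B. F = {A,B} \<and> A \<subseteq> S \<and> B \<subseteq> S \<and> A \<noteq> B \<and> A \<inter> B \<noteq> {}}"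
  define P where "P = {(A,B). A \<subseteq> S \<and> B \<subseteq> S \<and> A \<noteq> B \<and> A \<inter> B \<noteq> {}}"
  define D where "D = {(A,B). A \<subseteq> S \<and> B \<subseteq> S \<and> A \<inter> B = {}}"
  define E where "E = (\<lambda>A. (A,A)) ` (Pow S - {{}})"
  have finU: "finite U"
  proof (rule finite_subset)
    show "U \<subseteq> Pow (Pow S)" by (auto simp: U_def)
  qed (use fin in simp)
  have PU: "P = (\<Union>F\<in>U. {(a,b). a \<in> F \<and> b \<in> F \<and> a \<noteq> b})"
  proof
    show "P \<subseteq> (\<Union>F\<in>U. {(a,b). a \<in> F \<and> b \<in> F \<and> a \<noteq> b})"
    proof
      fix p assume "p \<in> P"
      then obtain a b where p: "p = (a,b)" "a \<subseteq> S" "b \<subseteq> S" "a \<noteq> b" "a \<inter> b \<noteq> {}" by (auto simp: P_def)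
      then have "{a,b} \<in> U" unfolding U_def by blast
      then show "p \<in> (\<Union>F\<in>U. {(a,b). a \<in> F \<and> b \<in> F \<and> a \<noteq> b})" using p by blast
    qed
  qed (auto simp: P_def U_def)
  have "card P = (\<Sum>F\<in>U. card {(a,b). a \<in> F \<and> b \<in> F \<and> a \<noteq> b})"
    unfolding PU
  proof (rule card_UN_disjoint[OF finU])
    show "\<forall>i\<in>U. finite {(a, b). a \<in> i \<and> b \<in> i \<and> a \<noteq> b}"
    proof
      fix F assume "F \<in> U"
      then have "finite F" by (auto simp: U_def)
      then have "finite (F \<times> F)" by simp
      moreover have "{(a, b). a \<in> F \<and> b \<in> F \<and> a \<noteq> b} \<subseteq> F \<times> F" by auto
      ultimately show "finite {(a, b). a \<in> F \<and> b \<in> F \<and> a \<noteq> b}"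
        by (rule finite_subset[rotated])
    qed
    show "\<forall>i\<in>U. \<forall>j\<in>U. i \<noteq> j \<longrightarrow> {(a, b). a \<in> i \<and> b \<in> i \<and> a \<noteq> b} \<inter> {(a, b). a \<in> j \<and> b \<in> j \<and> a \<noteq> b} = {}"
      by (auto simp: U_def)
  qed
  also have "\<dots> = (\<Sum>F\<in>U. 2)"
  proof (rule sum.cong[OF refl])
    fix F assume "F \<in> U"
    then obtain A B where F: "F = {A,B}" "A \<noteq> B" by (auto simp: U_def)
    then have "{(a,b). a \<in> F \<and> b \<in> F \<and> a \<noteq> b} = {(A,B),(B,A)}" by auto
    then show "card {(a,b). a \<in> F \<and> b \<in> F \<and> a \<noteq> b} = 2" using F by simp
  qed
  finally have cP: "card P = 2 * card U" by simp
  have cD: "card D = 3 ^ card S" unfolding D_def by (rule card_disj[OF fin])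
  have cE: "card E = 2 ^ card S - 1"
  proof -
    have "card E = card (Pow S - {{}})" unfolding E_def by (rule card_image) (auto simp: inj_on_def)
    also have "\<dots> = 2 ^ card S - 1" using fin by (simp add: card_Pow card_Diff_subset)
    finally show ?thesis .
  qed
  have all: "Pow S \<times> Pow S = P \<union> D \<union> E" by (auto simp: P_def D_def E_def)
  have fPS: "finite (Pow S \<times> Pow S)" using fin by simp
  have "card (Pow S \<times> Pow S) = card P + card D + card E"
    unfolding all
    using fPS all
    by (subst card_Un_disjoint, (auto simp: P_def D_def E_def)[3])
       (subst card_Un_disjoint, (auto simp: P_def D_def E_def)[3], simp)
  moreover have "card (Pow S \<times> Pow S) = 4 ^ card S" using fin
    by (simp add: card_cartesian_product card_Pow flip: power_mult_distrib)
  moreover have "(1::nat) \<le> 2 ^ card S" by simp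
  ultimately show ?thesis using cP cD cE unfolding U_def by simp
qed



lemma lin_dep_mono: "lin_dep S \<Longrightarrow> S \<subseteq> T \<Longrightarrow> finite T \<Longrightarrow> lin_dep T"
proof -
  assume "lin_dep S" "S \<subseteq> T" "finite T"
  then obtain c where c: "\<exists>I\<in>S. c I \<noteq> 0" "\<forall>j. (\<Sum>I\<in>S. c I * chi I j) = 0" by (auto simp: lin_dep_def)
  define c' where "c' = (\<lambda>I. if I \<in> S then c I else 0)"
  have "\<forall>j. (\<Sum>I\<in>T. c' I * chi I j) = 0"
  proof
    fix j
    have "(\<Sum>I\<in>T. c' I * chi I j) = (\<Sum>I\<in>S. c' I * chi I j)"
      by (rule sum.mono_neutral_right) (use \<open>S \<subseteq> T\<close> \<open>finite T\<close> in \<open>auto simp: c'_def\<close>)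
    also have "\<dots> = (\<Sum>I\<in>S. c I * chi I j)" by (rule sum.cong) (auto simp: c'_def)
    finally show "(\<Sum>I\<in>T. c' I * chi I j) = 0" using c by simp
  qed
  moreover have "\<exists>I\<in>T. c' I \<noteq> 0" using c \<open>S \<subseteq> T\<close> by (auto simp: c'_def)
  ultimately show "lin_dep T" unfolding lin_dep_def by blast
qed

lemma indep1: "I \<noteq> {} \<Longrightarrow> \<not> lin_dep {I}"
  by (auto simp: lin_dep_def chi_def)

lemma indep2:
  assumes "A \<noteq> {}" "B \<noteq> {}" "A \<noteq> B"
  shows "\<not> lin_dep {A,B}"
proof
  assume "lin_dep {A,B}"
  then obtain c where c: "c A \<noteq> 0 \<or> c B \<noteq> 0" "\<And>j. c A * chi A j + c B * chi B j = 0"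
    using assms(3) by (auto simp: lin_dep_def)
  show False
  proof (cases "\<exists>a. a \<in> A \<and> a \<notin> B")
    case True
    then obtain a where "a \<in> A" "a \<notin> B" by blast
    then have "c A = 0" using c(2)[of a] by (simp add: chi_def)
    moreover obtain b where "b \<in> B" using assms by blast
    ultimately have "c B = 0" using c(2)[of b] by (simp add: chi_def)
    then show False using c(1) \<open>c A = 0\<close> by simp
  next
    case False
    then obtain b where "b \<in> B" "b \<notin> A" using assms by blast
    then have "c B = 0" using c(2)[of b] by (simp add: chi_def)
    moreover obtain a where "a \<in> A" using assms by blast
    ultimately have "c A = 0" using c(2)[of a] by (simp add: chi_def)
    then show False using c(1) \<open>c B = 0\<close> by simp
  qed
qed

lemma indep3:
  assumes "A \<noteq> {}" "B \<noteq> {}" "H \<noteq> {}" "A \<noteq> B" "H \<noteq> A" "H \<noteq> B"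
    "A \<inter> B \<noteq> {}" "\<not> H \<subseteq> A" "\<not> H \<subseteq> B"
  shows "\<not> lin_dep {A,B,H}"
proof
  assume "lin_dep {A,B,H}"
  then obtain c where c: "c A \<noteq> 0 \<or> c B \<noteq> 0 \<or> c H \<noteq> 0"
      "\<And>j. c A * chi A j + c B * chi B j + c H * chi H j = 0"
    using assms by (auto simp: lin_dep_def algebra_simps)
  show False
  proof (cases "c H = 0")
    case True
    then have "lin_dep {A,B}" using c assms(4) unfolding lin_dep_def
      by (intro exI[of _ c]) auto
    then show False using indep2 assms by blast
  next
    case False
    obtain h where h: "h \<in> H" "h \<notin> A" using assms(8) by blast
    have "h \<in> B"
    proof (rule ccontr)
      assume "h \<notin> B" then show False using c(2)[of h] h False by (simp add: chi_def)
    qed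
    then have e1: "c B + c H = 0" using c(2)[of h] h by (simp add: chi_def)
    obtain h' where h': "h' \<in> H" "h' \<notin> B" using assms(9) by blast
    have "h' \<in> A"
    proof (rule ccontr)
      assume "h' \<notin> A" then show False using c(2)[of h'] h' False by (simp add: chi_def)
    qed
    then have e2: "c A + c H = 0" using c(2)[of h'] h' by (simp add: chi_def)
    obtain x where x: "x \<in> A" "x \<in> B" using assms(7) by blast
    show False
    proof (cases "x \<in> H")
      case True
      then show ?thesis using c(2)[of x] x e1 e2 False by (simp add: chi_def)
    next
      case xH: False
      then show ?thesis using c(2)[of x] x e1 e2 False by (simp add: chi_def)
    qed
  qed
qed

lemma bin_code_strict: "H \<subset> A \<Longrightarrow> finite A \<Longrightarrow> bin_code H < bin_code A"
proof -
  assume a: "H \<subset> A" "finite A"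
  then obtain b where "b \<in> A - H" by blast
  then show ?thesis unfolding bin_code_def by (intro sum_strict_mono2) (use a in auto)
qed

lemma bin_code_mono: "H \<subseteq> A \<Longrightarrow> finite A \<Longrightarrow> bin_code H \<le> bin_code A"
  unfolding bin_code_def by (rule sum_mono2) auto

lemma char:
  "{F \<in> bc_faces n. card F = 2} =
   {F. \<exists>A B. F = {A,B} \<and> A \<subseteq> {1..n} \<and> B \<subseteq> {1..n} \<and> A \<noteq> B \<and> A \<inter> B \<noteq> {}}"
proof (intro set_eqI iffI)
  fix F assume F: "F \<in> {F \<in> bc_faces n. card F = 2}"
  then obtain A B where AB: "F = {A,B}" "A \<noteq> B" by (auto simp: card_2_iff)
  have sub: "A \<in> res_hyps n" "B \<in> res_hyps n" using F AB by (auto simp: bc_faces_def)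
  have "A \<inter> B \<noteq> {}"
  proof
    assume disj: "A \<inter> B = {}"
    define U where "U = A \<union> B"
    have ne: "A \<noteq> {}" "B \<noteq> {}" "A \<subseteq> {1..n}" "B \<subseteq> {1..n}" using sub by (auto simp: res_hyps_def)
    have UA: "U \<noteq> A" "U \<noteq> B" using ne disj by (auto simp: U_def)
    have fin: "finite U" using ne by (auto simp: U_def intro: finite_subset)
    have circ: "circuit n {A,B,U}"
      unfolding circuit_def
    proof (intro conjI allI impI)
      show "{A,B,U} \<subseteq> res_hyps n" using ne by (auto simp: res_hyps_def U_def)
      show "lin_dep {A,B,U}"
        unfolding lin_dep_def
      proof (intro exI[of _ "\<lambda>I. if I = U then -1 else 1"] conjI allI)
        show "\<exists>I\<in>{A, B, U}. (if I = U then - 1 else 1) \<noteq> (0::real)" by auto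
        fix j
        show "(\<Sum>I\<in>{A, B, U}. (if I = U then - 1 else 1) * chi I j) = 0"
          using UA AB(2) disj by (auto simp: chi_def U_def)
      qed
      fix D assume D: "D \<subset> {A,B,U}"
      then have "D \<subseteq> {A,B} \<or> D \<subseteq> {A,U} \<or> D \<subseteq> {B,U}" by blast
      moreover have "\<not> lin_dep {A,B}" "\<not> lin_dep {A,U}" "\<not> lin_dep {B,U}"
        using indep2 ne UA AB(2) by (auto simp: U_def)
      ultimately show "\<not> lin_dep D" using lin_dep_mono by blast
    qed
    have "broken_circuit n {A,B}"
      unfolding broken_circuit_def
    proof (intro exI conjI)
      show "circuit n {A,B,U}" by (rule circ)
      show "U \<in> {A,B,U}" by simp
      show "\<forall>H'\<in>{A, B, U}. bin_code H' \<le> bin_code U"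
        using bin_code_mono fin by (auto simp: U_def)
      show "{A,B} = {A,B,U} - {U}" using UA by auto
    qed
    then show False using F AB by (auto simp: bc_faces_def)
  qed
  then show "F \<in> {F. \<exists>A B. F = {A,B} \<and> A \<subseteq> {1..n} \<and> B \<subseteq> {1..n} \<and> A \<noteq> B \<and> A \<inter> B \<noteq> {}}"
  proof -
    have "A \<subseteq> {1..n}" "B \<subseteq> {1..n}" using sub by (auto simp: res_hyps_def)
    then show ?thesis using AB \<open>A \<inter> B \<noteq> {}\<close> by blast
  qed
next
  fix F assume "F \<in> {F. \<exists>A B. F = {A,B} \<and> A \<subseteq> {1..n} \<and> B \<subseteq> {1..n} \<and> A \<noteq> B \<and> A \<inter> B \<noteq> {}}"
  then obtain A B where AB: "F = {A,B}" "A \<subseteq> {1..n}" "B \<subseteq> {1..n}" "A \<noteq> B" "A \<inter> B \<noteq> {}" by auto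
  have ne: "A \<noteq> {}" "B \<noteq> {}" using AB by auto
  have "\<not> (\<exists>B0. broken_circuit n B0 \<and> B0 \<subseteq> F)"
  proof
    assume "\<exists>B0. broken_circuit n B0 \<and> B0 \<subseteq> F"
    then obtain C H where C: "circuit n C" "H \<in> C" "\<forall>H'\<in>C. bin_code H' \<le> bin_code H"
      "C - {H} \<subseteq> {A,B}" using AB(1) unfolding broken_circuit_def by blast
    have CH: "C \<subseteq> {A,B,H}" using C by blast
    have dep: "lin_dep C" and Cres: "C \<subseteq> res_hyps n" using C(1) by (auto simp: circuit_def)
    have Hne: "H \<noteq> {}" "H \<subseteq> {1..n}" using Cres C(2) by (auto simp: res_hyps_def)
    show False
    proof (cases "H = A \<or> H = B")
      case True
      then have "C \<subseteq> {A,B}" using CH by blast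
      then have "lin_dep {A,B}" using lin_dep_mono dep by blast
      then show False using indep2 ne AB by blast
    next
      case False
      have "\<not> H \<subseteq> A"
      proof
        assume "H \<subseteq> A"
        then have "H \<subset> A" using False by blast
        then have "bin_code H < bin_code A" using bin_code_strict AB(2) finite_subset by blast
        moreover have "bin_code A \<le> bin_code H" if "A \<in> C" using C(3) that by blast
        ultimately have "A \<notin> C" by linarith
        then have "C \<subseteq> {B,H}" using CH by blast
        then have "lin_dep {B,H}" using lin_dep_mono dep by blast
        then show False using indep2 ne Hne False by blast
      qed
      moreover have "\<not> H \<subseteq> B"
      proof
        assume "H \<subseteq> B"
        then have "H \<subset> B" using False by blast
        then have "bin_code H < bin_code B" using bin_code_strict AB(3) finite_subset by blast
        moreover have "bin_code B \<le> bin_code H" if "B \<in> C" using C(3) that by blast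
        ultimately have "B \<notin> C" by linarith
        then have "C \<subseteq> {A,H}" using CH by blast
        then have "lin_dep {A,H}" using lin_dep_mono dep by blast
        then show False using indep2 ne Hne False by blast
      qed
      ultimately have "\<not> lin_dep {A,B,H}" using indep3 ne Hne AB False by blast
      then show False using lin_dep_mono dep CH by blast
    qed
  qed
  moreover have "F \<subseteq> res_hyps n" using AB ne by (auto simp: res_hyps_def)
  ultimately have "F \<in> bc_faces n" by (simp add: bc_faces_def)
  moreover have "card F = 2" using AB by simp
  ultimately show "F \<in> {F \<in> bc_faces n. card F = 2}" by simp
qed


theorem proposition6p1:
  fixes n :: nat
  assumes "n \<ge> 1"
  shows "f1_BC n = 2 * Stirling (n + 1) 3 + 3 * Stirling (n + 1) 4"
proof -
  have e: "2 * f1_BC n + 3 ^ n + 2 ^ n = 4 ^ n + 1"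
    unfolding f1_BC_def char using card_U[of "{1..n}"] by simp
  have e': "2 * int (f1_BC n) + 3 ^ n + 2 ^ n = 4 ^ n + 1"
    using arg_cong[OF e, of int] by simp
  have "2 * int (f1_BC n) = 2 * int (2 * Stirling (n + 1) 3 + 3 * Stirling (n + 1) 4)"
    using stir3[of n] stir4[of n] e' by (simp add: algebra_simps)
  then show ?thesis by simp
qed

end
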